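(* For $M=2$ there exist unitary operators $S,T$ on $\mathcal{H}_2\otimes\mathcal{H}_2$ such that $S\bar{Q}_fT=U_f$ for both permutations $f$ of $\mathbb{Z}_2$. For every integer $M\ge3$ there do not exist unitary operators $S,T$ on $\mathcal{H}_M\otimes\mathcal{H}_M$ such that $S\bar{Q}_fT=U_f$ for every permutation $f$ of $\mathbb{Z}_M$.
   Context: $\mathcal{H}_M$ is an $M$-dimensional Hilbert space with orthonormal basis $\{|x\rangle\}_{x\in\mathbb{Z}_M}$. For a permutation $f$ of $\mathbb{Z}_M$: the standard oracle operator is $U_f$ on $\mathcal{H}_M\otimes\mathcal{H}_M$ with $U_f|x\rangle\otimes|y\rangle=|x\rangle\otimes|y\oplus f(x)\rangle$ ($\oplus$ addition mod $M$); the minimal oracle operator is $Q_f$ on $\mathcal{H}_M$ with $Q_f|x\rangle=|f(x)\rangle$; the entanglement-assisted minimal oracle operator is $\bar{Q}_f=Q_f\otimes\mathbb{1}_M$. *)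

theory Defs
  imports "Jordan_Normal_Form.Schur_Decomposition" "HOL-Combinatorics.Permutations"
begin

text \<open>Operators on H_M (x) H_M are represented as complex (M*M) x (M*M) matrices
  w.r.t. the product basis |x> (x) |y>, which is given index x*M + y (x, y < M).
  Column j of a matrix is the image of the j-th basis vector.\<close>

definition unitary_mat :: "nat \<Rightarrow> complex mat \<Rightarrow> bool" where
  "unitary_mat n U \<longleftrightarrow> U \<in> carrier_mat n n \<and>
     U * mat_adjoint U = 1\<^sub>m n \<and> mat_adjoint U * U = 1\<^sub>m n"

text \<open>Standard oracle: U_f |x> (x) |y> = |x> (x) |y + f x mod M>.\<close>
definition std_oracle :: "nat \<Rightarrow> (nat \<Rightarrow> nat) \<Rightarrow> complex mat" where
  "std_oracle M f = mat (M*M) (M*M) (\<lambda>(i,j).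
     if i = (j div M) * M + ((j mod M + f (j div M)) mod M) then 1 else 0)"

text \<open>Entanglement-assisted minimal oracle: (Q_f (x) 1) |x> (x) |y> = |f x> (x) |y>.\<close>
definition ea_min_oracle :: "nat \<Rightarrow> (nat \<Rightarrow> nat) \<Rightarrow> complex mat" where
  "ea_min_oracle M f = mat (M*M) (M*M) (\<lambda>(i,j).
     if i = f (j div M) * M + j mod M then 1 else 0)"

end

theory Submission
  imports Defs
begin


lemma less4E: "(i::nat) < 4 \<Longrightarrow> (i = 0 \<Longrightarrow> P) \<Longrightarrow> (i = 1 \<Longrightarrow> P) \<Longrightarrow> (i = 2 \<Longrightarrow> P) \<Longrightarrow> (i = 3 \<Longrightarrow> P) \<Longrightarrow> P"
  by linarith

lemma sum4: "(\<Sum>k<4::nat. g k) = g 0 + g 1 + g 2 + g (3::nat)"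
  by (simp add: eval_nat_numeral)

definition SW :: "complex mat" where
  "SW = mat 4 4 (\<lambda>(i,j). if i = (j mod 2)*2 + j div 2 then 1 else 0)"
definition TW :: "complex mat" where
  "TW = mat 4 4 (\<lambda>(i,j). if i = ((j div 2 + j mod 2) mod 2)*2 + j div 2 then 1 else 0)"

lemma mult4: "A \<in> carrier_mat 4 4 \<Longrightarrow> B \<in> carrier_mat 4 4 \<Longrightarrow> i < 4 \<Longrightarrow> j < 4 \<Longrightarrow>
   (A * B) $$ (i,j) = A $$ (i,0) * B $$ (0,j) + A $$ (i,1) * B $$ (1,j) + A $$ (i,2) * B $$ (2,j) + A $$ (i,3) * B $$ (3,j)"
  by (simp add: scalar_prod_def lessThan_atLeast0[symmetric] sum4)

lemma adj4: "A \<in> carrier_mat 4 4 \<Longrightarrow> i < 4 \<Longrightarrow> j < 4 \<Longrightarrow> mat_adjoint A $$ (i,j) = cnj (A $$ (j,i))"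
  by (simp add: mat_adjoint_def mat_of_rows_def)

lemma adjc: "A \<in> carrier_mat 4 4 \<Longrightarrow> mat_adjoint A \<in> carrier_mat 4 4"
  unfolding mat_adjoint_def using mat_of_rows_carrier(1)[of 4 "map conjugate (cols A)"] by simp

lemma SWc: "SW \<in> carrier_mat 4 4" and TWc: "TW \<in> carrier_mat 4 4"
  by (simp_all add: SW_def TW_def)

lemma SWe: "i < 4 \<Longrightarrow> j < 4 \<Longrightarrow> SW $$ (i,j) = (if i = (j mod 2)*2 + j div 2 then 1 else 0)"
  by (simp add: SW_def)
lemma TWe: "i < 4 \<Longrightarrow> j < 4 \<Longrightarrow> TW $$ (i,j) = (if i = ((j div 2 + j mod 2) mod 2)*2 + j div 2 then 1 else 0)"
  by (simp add: TW_def)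

lemma eq4I: "A \<in> carrier_mat 4 4 \<Longrightarrow> B \<in> carrier_mat 4 4 \<Longrightarrow>
   (\<And>i j. i < 4 \<Longrightarrow> j < 4 \<Longrightarrow> A $$ (i,j) = B $$ (i,j)) \<Longrightarrow> A = B"
  by (rule eq_matI) auto

lemma eaE: "i < 4 \<Longrightarrow> j < 4 \<Longrightarrow> ea_min_oracle 2 f $$ (i,j) = (if i = f (j div 2) * 2 + j mod 2 then 1 else 0)"
  by (simp add: ea_min_oracle_def)
lemma stdE: "i < 4 \<Longrightarrow> j < 4 \<Longrightarrow> std_oracle 2 f $$ (i,j) = (if i = (j div 2) * 2 + ((j mod 2 + f (j div 2)) mod 2) then 1 else 0)"
  by (simp add: std_oracle_def)
lemma eac: "ea_min_oracle 2 f \<in> carrier_mat 4 4" by (simp add: ea_min_oracle_def)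
lemma stdc: "std_oracle 2 f \<in> carrier_mat 4 4" by (simp add: std_oracle_def)

lemma uSW: "unitary_mat 4 SW"
  unfolding unitary_mat_def
proof (intro conjI SWc)
  note c = SWc adjc[OF SWc]
  show "SW * mat_adjoint SW = 1\<^sub>m 4"
    apply (rule eq4I) using c apply auto[2]
    apply (elim less4E)
    using c by (simp_all add: mult4 adj4 SWe del: index_mult_mat)
  show "mat_adjoint SW * SW = 1\<^sub>m 4"
    apply (rule eq4I) using c apply auto[2]
    apply (elim less4E)
    using c by (simp_all add: mult4 adj4 SWe del: index_mult_mat)
qed

lemma uTW: "unitary_mat 4 TW"
  unfolding unitary_mat_def
proof (intro conjI TWc)
  note c = TWc adjc[OF TWc]
  show "TW * mat_adjoint TW = 1\<^sub>m 4"
    apply (rule eq4I) using c apply auto[2]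
    apply (elim less4E)
    using c by (simp_all add: mult4 adj4 TWe del: index_mult_mat)
  show "mat_adjoint TW * TW = 1\<^sub>m 4"
    apply (rule eq4I) using c apply auto[2]
    apply (elim less4E)
    using c by (simp_all add: mult4 adj4 TWe del: index_mult_mat)
qed

lemma orc_id: "SW * ea_min_oracle 2 id * TW = std_oracle 2 id"
  apply (rule eq4I)
  using SWc TWc eac[of id] stdc[of id] apply auto[2]
  apply (elim less4E)
  using SWc TWc eac[of id] stdc[of id]
  by (simp_all add: mult4 SWe TWe eaE stdE del: index_mult_mat)

lemma orc_sw: "SW * ea_min_oracle 2 (transpose 0 1) * TW = std_oracle 2 (transpose 0 1)"
  apply (rule eq4I)
  using SWc TWc eac stdc apply auto[2]
  apply (elim less4E)
  using SWc TWc eac stdc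
  by (simp_all add: mult4 SWe TWe eaE stdE del: index_mult_mat)


lemma std_vec:
  assumes j: "j < M*M"
  shows "std_oracle M f *\<^sub>v unit_vec (M*M) j = unit_vec (M*M) ((j div M)*M + ((j mod M + f (j div M)) mod M))"
proof -
  have M0: "M > 0" using j by (cases M) auto
  have jd: "j div M < M" using j by (simp add: less_mult_imp_div_less)
  have lt: "(j div M)*M + ((j mod M + f (j div M)) mod M) < M*M"
  proof -
    have "(j div M)*M + ((j mod M + f (j div M)) mod M) < (j div M)*M + M" using M0 by simp
    also have "\<dots> = (Suc (j div M)) * M" by simp
    also have "\<dots> \<le> M * M" by (intro mult_le_mono1) (use jd in auto)
    finally show ?thesis .
  qed
  show ?thesis
    by (rule eq_vecI) (auto simp: std_oracle_def j lt scalar_prod_right_unit)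
qed

lemma ea_id: "ea_min_oracle M id = 1\<^sub>m (M*M)"
  by (rule eq_matI) (auto simp: ea_min_oracle_def)

lemma ea_invol:
  assumes ff: "\<And>x. f (f x) = x" and fM: "\<And>x. x < M \<Longrightarrow> f x < M"
    and w: "w \<in> carrier_vec (M*M)"
  shows "ea_min_oracle M f *\<^sub>v (ea_min_oracle M f *\<^sub>v w) = w"
proof -
  define p where "p j = f (j div M) * M + j mod M" for j
  have M0: "j < M*M \<Longrightarrow> M > 0" for j by (cases M) auto
  have pl: "p j < M*M" if "j < M*M" for j
  proof -
    have jd: "j div M < M" using that by (simp add: less_mult_imp_div_less)
    have "p j < f (j div M) * M + M" unfolding p_def using M0[OF that] by simp
    also have "\<dots> = Suc (f (j div M)) * M" by simp
    also have "\<dots> \<le> M*M" by (intro mult_le_mono1) (use fM[OF jd] in auto)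
    finally show ?thesis .
  qed
  have pp: "p (p j) = j" if "j < M*M" for j
    using M0[OF that] unfolding p_def by (simp add: ff)
  have act: "(ea_min_oracle M f *\<^sub>v v) $ i = v $ p i" if "i < M*M" "v \<in> carrier_vec (M*M)" for i v
  proof -
    have "(ea_min_oracle M f *\<^sub>v v) $ i = (\<Sum>j\<in>{..<M*M}. (if i = p j then 1 else 0) * v $ j)"
      using that by (simp add: ea_min_oracle_def scalar_prod_def p_def lessThan_atLeast0)
    also have "\<dots> = (\<Sum>j\<in>{..<M*M}. if j = p i then v $ j else 0)"
      by (rule sum.cong) (auto simp: pp that)
    also have "\<dots> = v $ p i" using pl[OF that(1)] by simp
    finally show ?thesis .
  qed
  have dQ: "ea_min_oracle M f \<in> carrier_mat (M*M) (M*M)" by (simp add: ea_min_oracle_def)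
  have cw: "ea_min_oracle M f *\<^sub>v w \<in> carrier_vec (M*M)" using dQ w by simp
  show ?thesis
  proof (rule eq_vecI)
    fix i assume i: "i < dim_vec w"
    then have i': "i < M*M" using w by simp
    show "(ea_min_oracle M f *\<^sub>v (ea_min_oracle M f *\<^sub>v w)) $ i = w $ i"
      using act[OF i' cw] act[OF pl[OF i'] w] pp[OF i'] by simp
  qed (use dQ w in simp)
qed

lemma part2:
  assumes M: "M \<ge> 3"
  shows "\<not> (\<exists>S T. unitary_mat (M*M) S \<and> unitary_mat (M*M) T \<and>
                 (\<forall>f. f permutes {..<M} \<longrightarrow>
                    S * ea_min_oracle M f * T = std_oracle M f))"
proof
  assume "\<exists>S T. unitary_mat (M*M) S \<and> unitary_mat (M*M) T \<and>
                 (\<forall>f. f permutes {..<M} \<longrightarrow>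
                    S * ea_min_oracle M f * T = std_oracle M f)"
  then obtain S T where uS: "unitary_mat (M*M) S" and uT: "unitary_mat (M*M) T"
    and H: "\<And>f. f permutes {..<M} \<Longrightarrow> S * ea_min_oracle M f * T = std_oracle M f" by blast
  define n where "n = M*M"
  have n3: "n > 2"
  proof -
    have "3*3 \<le> M*M" using mult_le_mono[OF M M] .
    then show ?thesis unfolding n_def by simp
  qed
  have S: "S \<in> carrier_mat n n" and SS: "mat_adjoint S * S = 1\<^sub>m n"
    using uS unfolding unitary_mat_def n_def by blast+
  have T: "T \<in> carrier_mat n n" using uT unfolding unitary_mat_def n_def by blast
  have Sa: "mat_adjoint S \<in> carrier_mat n n"
  proof -
    have "dim_row S = n" "dim_col S = n" using S by auto
    then show ?thesis unfolding mat_adjoint_def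
      using mat_of_rows_carrier(1)[of n "map conjugate (cols S)"] by simp
  qed
  define f :: "nat \<Rightarrow> nat" where "f = transpose 0 1"
  have fp: "f permutes {..<M}" unfolding f_def using M by (intro permutes_swap_id) auto
  have ff: "f (f x) = x" for x unfolding f_def by simp
  have fM: "x < M \<Longrightarrow> f x < M" for x using M unfolding f_def by (auto simp: transpose_def)
  define Q where "Q = ea_min_oracle M f"
  have Q: "Q \<in> carrier_mat n n" unfolding Q_def n_def by (simp add: ea_min_oracle_def)
  have HI: "S * T = std_oracle M id"
    using H[OF permutes_id] S by (simp add: ea_id n_def[symmetric])
  have HF: "S * Q * T = std_oracle M f" using H[OF fp] Q_def by simp
  define e :: "nat \<Rightarrow> complex vec" where "e i = unit_vec n i" for i
  have M0: "0 < M" using M by simp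
  have ui1: "std_oracle M id *\<^sub>v e 1 = e 1"
    using std_vec[of 1 M id] n3 M unfolding e_def n_def by simp
  have ui0: "std_oracle M id *\<^sub>v e 0 = e 0"
    using std_vec[of 0 M id] n3 M M0 unfolding e_def n_def by simp
  have uf0: "std_oracle M f *\<^sub>v e 0 = e 1"
    using std_vec[of 0 M f] n3 M M0 unfolding e_def n_def by (simp add: f_def)
  have uf1: "std_oracle M f *\<^sub>v e 1 = e 2"
    using std_vec[of 1 M f] n3 M M0 unfolding e_def n_def by (simp add: f_def)
  have ec: "e i \<in> carrier_vec n" for i unfolding e_def by simp
  have a1: "S *\<^sub>v (T *\<^sub>v e 1) = e 1"
    using ui1 unfolding HI[symmetric] using S T ec by (subst (asm) assoc_mult_mat_vec) auto
  have a2: "S *\<^sub>v (Q *\<^sub>v (T *\<^sub>v e 0)) = e 1"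
    using uf0 unfolding HF[symmetric] using S T Q ec
    by (subst (asm) assoc_mult_mat_vec assoc_mult_mat_vec; auto)+
  have canc: "x = y" if "S *\<^sub>v x = S *\<^sub>v y" "x \<in> carrier_vec n" "y \<in> carrier_vec n" for x y
  proof -
    have "(mat_adjoint S * S) *\<^sub>v x = (mat_adjoint S * S) *\<^sub>v y"
      using that S Sa by (simp add: assoc_mult_mat_vec)
    then show ?thesis using SS that by simp
  qed
  have b: "T *\<^sub>v e 1 = Q *\<^sub>v (T *\<^sub>v e 0)"
    using canc[of "T *\<^sub>v e 1" "Q *\<^sub>v (T *\<^sub>v e 0)"] a1 a2 T Q ec by simp
  have c: "Q *\<^sub>v (T *\<^sub>v e 1) = T *\<^sub>v e 0"
    unfolding b Q_def using ea_invol[OF ff fM, of "T *\<^sub>v e 0"] T ec n_def by simp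
  have "e 2 = S *\<^sub>v (Q *\<^sub>v (T *\<^sub>v e 1))"
    using uf1 unfolding HF[symmetric] using S T Q ec
    by (subst (asm) assoc_mult_mat_vec assoc_mult_mat_vec; auto)+
  also have "\<dots> = e 0" unfolding c
    using ui0 unfolding HI[symmetric] using S T ec by (subst (asm) assoc_mult_mat_vec) auto
  finally have "e 2 = e 0" .
  then have "e 2 $ 2 = e 0 $ 2" by simp
  then show False using n3 unfolding e_def by simp
qed


lemma perm2: "f permutes {..<2::nat} \<Longrightarrow> f = id \<or> f = transpose 0 1"
proof -
  assume p: "f permutes {..<2::nat}"
  have out: "x \<ge> 2 \<Longrightarrow> f x = x" for x using p unfolding permutes_def by simp
  have f0: "f 0 < 2" "f 1 < 2"
    using permutes_in_image[OF p, of 0] permutes_in_image[OF p, of 1] by auto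
  have inj: "f 0 \<noteq> f 1"
  proof
    assume "f 0 = f 1"
    then have "(0::nat) = 1" using injD[OF permutes_inj[OF p]] by blast
    then show False by simp
  qed
  have cs: "x = 0 \<or> x = 1 \<or> x \<ge> 2" for x :: nat by linarith
  show ?thesis
  proof (cases "f 0 = 0")
    case True
    then have "f 1 = 1" using f0 inj by linarith
    have "f = id"
    proof
      fix x :: nat show "f x = id x" using cs[of x] True \<open>f 1 = 1\<close> out[of x] by auto
    qed
    then show ?thesis ..
  next
    case False
    then have a: "f 0 = 1" "f 1 = 0" using f0 inj by linarith+
    have "f = transpose 0 1"
    proof
      fix x :: nat show "f x = transpose 0 1 x" using cs[of x] a out[of x] by auto
    qed
    then show ?thesis ..
  qed
qed

theorem mainTheorem14:
  shows "(\<exists>S T. unitary_mat 4 S \<and> unitary_mat 4 T \<and>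
            (\<forall>f. f permutes {..<2::nat} \<longrightarrow>
               S * ea_min_oracle 2 f * T = std_oracle 2 f))
       \<and> (\<forall>M::nat. M \<ge> 3 \<longrightarrow>
            \<not> (\<exists>S T. unitary_mat (M*M) S \<and> unitary_mat (M*M) T \<and>
                 (\<forall>f. f permutes {..<M} \<longrightarrow>
                    S * ea_min_oracle M f * T = std_oracle M f)))"
proof (intro conjI allI impI)
  show "\<exists>S T. unitary_mat 4 S \<and> unitary_mat 4 T \<and>
            (\<forall>f. f permutes {..<2::nat} \<longrightarrow>
               S * ea_min_oracle 2 f * T = std_oracle 2 f)"
    using uSW uTW orc_id orc_sw perm2 by blast
next
  fix M :: nat assume "M \<ge> 3"
  then show "\<not> (\<exists>S T. unitary_mat (M*M) S \<and> unitary_mat (M*M) T \<and>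
                 (\<forall>f. f permutes {..<M} \<longrightarrow>
                    S * ea_min_oracle M f * T = std_oracle M f))" by (rule part2)
qed

end
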